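(* Let $(\mathcal A,(p_n)_{n\in\mathbb N})$ and $(\mathcal B,(q_m)_{m\in\mathbb N})$ be Fréchet algebras and let $\varphi:\mathcal A\to\mathcal B$ be a continuous homomorphism with dense range. Let $I$ be a closed ideal of $\mathcal A$ and $J$ a closed ideal of $\mathcal B$ such that $\varphi(I)\subseteq J$. If $\mathcal A$ has a locally bounded approximate diagonal modulo $I$, then $\mathcal B$ has a locally bounded approximate diagonal modulo $J$.
   Context: A Fréchet algebra $(\mathcal A,(p_n))$ is a complete Hausdorff topological algebra whose topology is given by an increasing sequence $p_1\le p_2\le\cdots$ of submultiplicative seminorms. For a closed ideal $I$ of $\mathcal A$, $\mathcal A/I$ is a Fréchet algebra with seminorms $\hat p_n(a+I)=\inf\{p_n(a+b):b\in I\}$; write $\tilde a=a+I$. Let $\frac{\mathcal A}{I}\widehat\otimes\frac{\mathcal A}{I}$ be the completed projective tensor product, with seminorms $\hat r_n(M)=\inf\{\sum_i \hat p_n(x_i)\hat p_n(y_i): M=\sum_i x_i\otimes y_i\}$. It is an $\mathcal A$-bimodule via $a\cdot((b+I)\otimes(c+I))=(ab+I)\otimes(c+I)$ and $((b+I)\otimes(c+I))\cdot a=(b+I)\otimes(ca+I)$; $\mathcal A$ acts on $\mathcal A/I$ by $a\cdot(b+I)=ab+I$. The diagonal map $\pi_{\mathcal A/I}:\frac{\mathcal A}{I}\widehat\otimes\frac{\mathcal A}{I}\to\frac{\mathcal A}{I}$ is the continuous linear map with $(b+I)\otimes(c+I)\mapsto bc+I$. $\mathcal A$ has a locally bounded approximate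 diagonal modulo $I$ if there exist positive reals $C_n$ ($n\in\mathbb N$) such that for every finite set $F\subseteq\mathcal A\setminus I$, every $n\in\mathbb N$ and every $\varepsilon>0$ there is $M\in\frac{\mathcal A}{I}\widehat\otimes\frac{\mathcal A}{I}$ with $\hat r_n(M)\le C_n$, $\hat r_n(a\cdot M-M\cdot a)<\varepsilon$ for all $a\in F$, and $\hat p_n(a\cdot\pi_{\mathcal A/I}(M)-\tilde a)<\varepsilon$ for all $a\in\mathcal A$. The analogous notions are used for $\mathcal B$, $J$ and the seminorms $q_m$. *)

theory Defs
  imports Main "HOL.Real_Vector_Spaces"
begin

text \<open>A Frechet algebra is modelled as a (not necessarily unital) real algebra (the whole type
  is the algebra) together with a sequence of seminorms p n.\<close>

definition seminorm :: "('a::real_vector \<Rightarrow> real) \<Rightarrow> bool" where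
  "seminorm s \<longleftrightarrow> (\<forall>x y. s (x + y) \<le> s x + s y) \<and> (\<forall>r x. s (r *\<^sub>R x) = \<bar>r\<bar> * s x)"

definition sn_cauchy :: "(nat \<Rightarrow> 'a::real_vector \<Rightarrow> real) \<Rightarrow> (nat \<Rightarrow> 'a) \<Rightarrow> bool" where
  "sn_cauchy p X \<longleftrightarrow> (\<forall>n \<epsilon>. \<epsilon> > 0 \<longrightarrow> (\<exists>K. \<forall>j\<ge>K. \<forall>k\<ge>K. p n (X j - X k) < \<epsilon>))"

definition sn_converges :: "(nat \<Rightarrow> 'a::real_vector \<Rightarrow> real) \<Rightarrow> (nat \<Rightarrow> 'a) \<Rightarrow> 'a \<Rightarrow> bool" where
  "sn_converges p X x \<longleftrightarrow> (\<forall>n \<epsilon>. \<epsilon> > 0 \<longrightarrow> (\<exists>K. \<forall>k\<ge>K. p n (X k - x) < \<epsilon>))"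

definition frechet_algebra :: "(nat \<Rightarrow> 'a::real_algebra \<Rightarrow> real) \<Rightarrow> bool" where
  "frechet_algebra p \<longleftrightarrow>
     (\<forall>n. seminorm (p n)) \<and>
     (\<forall>n x y. p n (x * y) \<le> p n x * p n y) \<and>
     (\<forall>n x. p n x \<le> p (Suc n) x) \<and>
     (\<forall>x. (\<forall>n. p n x = 0) \<longrightarrow> x = 0) \<and>
     (\<forall>X. sn_cauchy p X \<longrightarrow> (\<exists>x. sn_converges p X x))"

definition sn_open :: "(nat \<Rightarrow> 'a::real_vector \<Rightarrow> real) \<Rightarrow> 'a set \<Rightarrow> bool" where
  "sn_open p U \<longleftrightarrow> (\<forall>x\<in>U. \<exists>n \<epsilon>. \<epsilon> > 0 \<and> {y. p n (y - x) < \<epsilon>} \<subseteq> U)"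

definition sn_continuous ::
  "(nat \<Rightarrow> 'a::real_vector \<Rightarrow> real) \<Rightarrow> (nat \<Rightarrow> 'b::real_vector \<Rightarrow> real) \<Rightarrow> ('a \<Rightarrow> 'b) \<Rightarrow> bool" where
  "sn_continuous p q f \<longleftrightarrow> (\<forall>U. sn_open q U \<longrightarrow> sn_open p (f -` U))"

definition sn_dense :: "(nat \<Rightarrow> 'a::real_vector \<Rightarrow> real) \<Rightarrow> 'a set \<Rightarrow> bool" where
  "sn_dense p S \<longleftrightarrow> (\<forall>U. sn_open p U \<and> U \<noteq> {} \<longrightarrow> U \<inter> S \<noteq> {})"

definition alg_hom :: "('a::real_algebra \<Rightarrow> 'b::real_algebra) \<Rightarrow> bool" where
  "alg_hom f \<longleftrightarrow> (\<forall>x y. f (x + y) = f x + f y) \<and> (\<forall>r x. f (r *\<^sub>R x) = r *\<^sub>R f x)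
     \<and> (\<forall>x y. f (x * y) = f x * f y)"

definition two_sided_ideal :: "'a::real_algebra set \<Rightarrow> bool" where
  "two_sided_ideal I \<longleftrightarrow> 0 \<in> I \<and> (\<forall>x\<in>I. \<forall>y\<in>I. x + y \<in> I) \<and> (\<forall>r. \<forall>x\<in>I. r *\<^sub>R x \<in> I)
     \<and> (\<forall>a. \<forall>x\<in>I. a * x \<in> I \<and> x * a \<in> I)"

definition closed_ideal :: "(nat \<Rightarrow> 'a::real_algebra \<Rightarrow> real) \<Rightarrow> 'a set \<Rightarrow> bool" where
  "closed_ideal p I \<longleftrightarrow> two_sided_ideal I \<and> sn_open p (- I)"

text \<open>Quotient seminorm on A/I, evaluated at a representative: \<open>qsn p I n x = p\<^sup>^_n(x + I)\<close>.\<close>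
definition qsn :: "(nat \<Rightarrow> 'a::real_algebra \<Rightarrow> real) \<Rightarrow> 'a set \<Rightarrow> nat \<Rightarrow> 'a \<Rightarrow> real" where
  "qsn p I n x = Inf {p n (x + b) | b. b \<in> I}"

text \<open>Elements of the algebraic tensor product (A/I) \<otimes> (A/I) are represented by finite lists of
  pairs of representatives [(x_1,y_1),...] standing for \<Sum> (x_i+I) \<otimes> (y_i+I).
  Two lists represent the same tensor iff every bilinear form on (A/I) \<times> (A/I) takes the same
  value on them (the algebraic dual of the tensor product is the space of bilinear forms).\<close>
definition quot_bilinear :: "'a::real_algebra set \<Rightarrow> ('a \<Rightarrow> 'a \<Rightarrow> real) \<Rightarrow> bool" where
  "quot_bilinear I \<beta> \<longleftrightarrow>
     (\<forall>x x' y. \<beta> (x + x') y = \<beta> x y + \<beta> x' y) \<and> (\<forall>r x y. \<beta> (r *\<^sub>R x) y = r * \<beta> x y) \<and>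
     (\<forall>x y y'. \<beta> x (y + y') = \<beta> x y + \<beta> x y') \<and> (\<forall>r x y. \<beta> x (r *\<^sub>R y) = r * \<beta> x y) \<and>
     (\<forall>x y. x \<in> I \<or> y \<in> I \<longrightarrow> \<beta> x y = 0)"

definition tensor_eq :: "'a::real_algebra set \<Rightarrow> ('a \<times> 'a) list \<Rightarrow> ('a \<times> 'a) list \<Rightarrow> bool" where
  "tensor_eq I L L' \<longleftrightarrow> (\<forall>\<beta>. quot_bilinear I \<beta> \<longrightarrow>
      (\<Sum>(x,y)\<leftarrow>L. \<beta> x y) = (\<Sum>(x,y)\<leftarrow>L'. \<beta> x y))"

definition tsn :: "(nat \<Rightarrow> 'a::real_algebra \<Rightarrow> real) \<Rightarrow> 'a set \<Rightarrow> nat \<Rightarrow> ('a \<times> 'a) list \<Rightarrow> real" where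
  "tsn p I n L = Inf {(\<Sum>(x,y)\<leftarrow>L'. qsn p I n x * qsn p I n y) | L'. tensor_eq I L L'}"

definition tdiff :: "('a::real_algebra \<times> 'a) list \<Rightarrow> ('a \<times> 'a) list \<Rightarrow> ('a \<times> 'a) list" where
  "tdiff L L' = L @ map (\<lambda>(x,y). (- x, y)) L'"

definition lmod :: "'a::real_algebra \<Rightarrow> ('a \<times> 'a) list \<Rightarrow> ('a \<times> 'a) list" where
  "lmod a L = map (\<lambda>(x,y). (a * x, y)) L"

definition rmod :: "('a::real_algebra \<times> 'a) list \<Rightarrow> 'a \<Rightarrow> ('a \<times> 'a) list" where
  "rmod L a = map (\<lambda>(x,y). (x, y * a)) L"

definition tpi :: "('a::real_algebra \<times> 'a) list \<Rightarrow> 'a" where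
  "tpi L = (\<Sum>(x,y)\<leftarrow>L. x * y)"

text \<open>Elements of the completed projective tensor product are represented by sequences of
  algebraic tensors that are Cauchy for every \<open>r\<^sup>^_n\<close> (completion by Cauchy sequences);
  seminorms and all continuous expressions are evaluated as limits along the sequence.\<close>
definition tcauchy :: "(nat \<Rightarrow> 'a::real_algebra \<Rightarrow> real) \<Rightarrow> 'a set \<Rightarrow> (nat \<Rightarrow> ('a \<times> 'a) list) \<Rightarrow> bool" where
  "tcauchy p I M \<longleftrightarrow> (\<forall>n \<epsilon>. \<epsilon> > 0 \<longrightarrow> (\<exists>K. \<forall>j\<ge>K. \<forall>k\<ge>K. tsn p I n (tdiff (M j) (M k)) < \<epsilon>))"

definition has_lbad :: "(nat \<Rightarrow> 'a::real_algebra \<Rightarrow> real) \<Rightarrow> 'a set \<Rightarrow> bool" where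
  "has_lbad p I \<longleftrightarrow> (\<exists>C :: nat \<Rightarrow> real. (\<forall>n. C n > 0) \<and>
     (\<forall>F n \<epsilon>. finite F \<and> F \<subseteq> - I \<and> \<epsilon> > 0 \<longrightarrow>
        (\<exists>M. tcauchy p I M \<and>
             lim (\<lambda>k. tsn p I n (M k)) \<le> C n \<and>
             (\<forall>a\<in>F. lim (\<lambda>k. tsn p I n (tdiff (lmod a (M k)) (rmod (M k) a))) < \<epsilon>) \<and>
             (\<forall>a. lim (\<lambda>k. qsn p I n (a * tpi (M k) - a)) < \<epsilon>))))"

end

theory Submission
  imports Defs Complex_Main
begin


lemma sep_functional:
  fixes I :: "'a::real_vector set"
  assumes "subspace I" "v \<notin> I"
  shows "\<exists>f::'a\<Rightarrow>real. linear f \<and> (\<forall>x\<in>I. f x = 0) \<and> f v = 1"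
proof -
  obtain B where B: "B \<subseteq> I" "independent B" "I \<subseteq> span B"
    by (rule maximal_independent_subset)
  have sB: "span B = I" using B assms(1)
    by (metis span_eq_iff span_mono subset_antisym)
  have ind: "independent (insert v B)" using B assms sB by (simp add: independent_insertI)
  from real_vector.linear_independent_extend[OF ind, of "\<lambda>x. if x = v then (1::real) else 0"]
  obtain g :: "'a \<Rightarrow> real" where g: "linear g" "\<And>x. x\<in>insert v B \<Longrightarrow> g x = (if x = v then 1 else 0)"
    by blast
  have g0: "\<And>x. x\<in>B \<Longrightarrow> g x = 0" using g B assms by auto
  have "\<And>x. x\<in>span B \<Longrightarrow> g x = 0"
    by (rule real_vector.linear_eq_0_on_span[OF g(1) g0])
  thus ?thesis using g sB by auto
qed

lemma le_mult_Inf: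
  fixes S :: "real set"
  assumes "S \<noteq> {}" "K \<ge> 0" "\<And>v. v\<in>S \<Longrightarrow> z \<le> K * v"
  shows "z \<le> K * Inf S"
proof (cases "K = 0")
  case True
  then obtain v where "v \<in> S" using assms(1) by auto
  then show ?thesis using assms(3) True by force
next
  case False
  hence K: "K > 0" using assms(2) by simp
  have "z / K \<le> Inf S"
    by (rule cInf_greatest[OF assms(1)]) (use assms(3) K in \<open>simp add: divide_le_eq mult.commute\<close>)
  thus ?thesis using K by (simp add: divide_le_eq mult.commute)
qed

definition bsum :: "('a \<Rightarrow> 'a \<Rightarrow> real) \<Rightarrow> ('a \<times> 'a) list \<Rightarrow> real" where
  "bsum \<beta> L = (\<Sum>(x,y)\<leftarrow>L. \<beta> x y)"

lemma bsum_Nil[simp]: "bsum \<beta> [] = 0" by (simp add: bsum_def)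
lemma bsum_Cons[simp]: "bsum \<beta> ((x,y)#L) = \<beta> x y + bsum \<beta> L" by (simp add: bsum_def)
lemma bsum_append[simp]: "bsum \<beta> (L @ L') = bsum \<beta> L + bsum \<beta> L'" by (simp add: bsum_def)

lemma tensor_eq_bsum: "tensor_eq I L L' \<longleftrightarrow> (\<forall>\<beta>. quot_bilinear I \<beta> \<longrightarrow> bsum \<beta> L = bsum \<beta> L')"
  by (simp add: tensor_eq_def bsum_def)

definition neg1 :: "('a::real_algebra \<times> 'a) list \<Rightarrow> ('a \<times> 'a) list" where
  "neg1 L = map (\<lambda>(x,y). (- x, y)) L"

lemma neg1_Nil[simp]: "neg1 [] = []" by (simp add: neg1_def)
lemma neg1_Cons[simp]: "neg1 ((x,y)#L) = (-x,y) # neg1 L" by (simp add: neg1_def)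
lemma neg1_append[simp]: "neg1 (L @ L') = neg1 L @ neg1 L'" by (simp add: neg1_def)
lemma neg1_neg1[simp]: "neg1 (neg1 L) = L" by (induction L) auto
lemma tdiff_neg1: "tdiff L L' = L @ neg1 L'" by (simp add: tdiff_def neg1_def)

lemma qb_neg: "quot_bilinear I \<beta> \<Longrightarrow> \<beta> (- x) y = - \<beta> x y"
  unfolding quot_bilinear_def by (metis mult_minus1 scaleR_minus1_left)

lemma bsum_neg1[simp]: "quot_bilinear I \<beta> \<Longrightarrow> bsum \<beta> (neg1 L) = - bsum \<beta> L"
  by (induction L) (auto simp: qb_neg)

lemma tensor_eq_refl[simp]: "tensor_eq I L L" by (simp add: tensor_eq_def)
lemma tensor_eq_sym: "tensor_eq I L L' \<Longrightarrow> tensor_eq I L' L" by (simp add: tensor_eq_def)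
lemma tensor_eq_trans: "tensor_eq I L L' \<Longrightarrow> tensor_eq I L' L'' \<Longrightarrow> tensor_eq I L L''"
  by (simp add: tensor_eq_def)

definition tval :: "(nat \<Rightarrow> 'a::real_algebra \<Rightarrow> real) \<Rightarrow> 'a set \<Rightarrow> nat \<Rightarrow> ('a \<times> 'a) list \<Rightarrow> real" where
  "tval p I n L = (\<Sum>(x,y)\<leftarrow>L. qsn p I n x * qsn p I n y)"

lemma tval_Nil[simp]: "tval p I n [] = 0" by (simp add: tval_def)
lemma tval_Cons[simp]: "tval p I n ((x,y)#L) = qsn p I n x * qsn p I n y + tval p I n L" by (simp add: tval_def)
lemma tval_append[simp]: "tval p I n (L @ L') = tval p I n L + tval p I n L'" by (simp add: tval_def)

lemma tsn_alt: "tsn p I n L = Inf {tval p I n L' | L'. tensor_eq I L L'}"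
  by (simp add: tsn_def tval_def)

lemma tpi_Nil[simp]: "tpi [] = 0" by (simp add: tpi_def)
lemma tpi_Cons[simp]: "tpi ((x,y)#L) = x * y + tpi L" by (simp add: tpi_def)
lemma tpi_append[simp]: "tpi (L @ L') = tpi L + tpi L'" by (simp add: tpi_def)
lemma tpi_neg1[simp]: "tpi (neg1 L) = - tpi L" by (induction L) auto
lemma tpi_tdiff: "tpi (tdiff L L') = tpi L - tpi L'" by (simp add: tdiff_neg1)

lemma lmod_Nil[simp]: "lmod a [] = []" by (simp add: lmod_def)
lemma lmod_Cons[simp]: "lmod a ((x,y)#L) = (a*x,y) # lmod a L" by (simp add: lmod_def)
lemma lmod_append[simp]: "lmod a (L @ L') = lmod a L @ lmod a L'" by (simp add: lmod_def)
lemma lmod_neg1[simp]: "lmod a (neg1 L) = neg1 (lmod a L)" by (induction L) auto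
lemma rmod_Nil[simp]: "rmod [] a = []" by (simp add: rmod_def)
lemma rmod_Cons[simp]: "rmod ((x,y)#L) a = (x,y*a) # rmod L a" by (simp add: rmod_def)
lemma rmod_append[simp]: "rmod (L @ L') a = rmod L a @ rmod L' a" by (simp add: rmod_def)
lemma rmod_neg1[simp]: "rmod (neg1 L) a = neg1 (rmod L a)" by (induction L) auto

definition comm :: "'a::real_algebra \<Rightarrow> ('a \<times> 'a) list \<Rightarrow> ('a \<times> 'a) list" where
  "comm a L = tdiff (lmod a L) (rmod L a)"

locale fq =
  fixes p :: "nat \<Rightarrow> 'a::real_algebra \<Rightarrow> real" and I :: "'a set"
  assumes fa: "frechet_algebra p" and idl: "two_sided_ideal I"
begin

lemma p_tri: "p n (x + y) \<le> p n x + p n y"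
  using fa unfolding frechet_algebra_def seminorm_def by blast
lemma p_hom: "p n (r *\<^sub>R x) = \<bar>r\<bar> * p n x"
  using fa unfolding frechet_algebra_def seminorm_def by blast
lemma p_mult: "p n (x * y) \<le> p n x * p n y"
  using fa unfolding frechet_algebra_def by blast
lemma p_0[simp]: "p n 0 = 0"
  using p_hom[of n 0 0] by simp
lemma p_neg[simp]: "p n (- x) = p n x"
  using p_hom[of n "-1" x] by simp
lemma p_nonneg: "0 \<le> p n x"
  using p_tri[of n x "-x"] by simp
lemma p_sym: "p n (x - y) = p n (y - x)"
  by (metis minus_diff_eq p_neg)

lemma I0: "0 \<in> I" using idl by (simp add: two_sided_ideal_def)
lemma Iadd: "x \<in> I \<Longrightarrow> y \<in> I \<Longrightarrow> x + y \<in> I" using idl by (simp add: two_sided_ideal_def)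
lemma Iscale: "x \<in> I \<Longrightarrow> r *\<^sub>R x \<in> I" using idl by (simp add: two_sided_ideal_def)
lemma Ineg: "x \<in> I \<Longrightarrow> - x \<in> I" using Iscale[of x "-1"] by simp
lemma Idiff: "x \<in> I \<Longrightarrow> y \<in> I \<Longrightarrow> x - y \<in> I" using Iadd Ineg by fastforce
lemma Imultl: "x \<in> I \<Longrightarrow> a * x \<in> I" using idl by (simp add: two_sided_ideal_def)
lemma Imultr: "x \<in> I \<Longrightarrow> x * a \<in> I" using idl by (simp add: two_sided_ideal_def)
lemma Isub: "subspace I" using I0 Iadd Iscale by (simp add: subspace_def)

lemma qset_ne: "{p n (x + b) | b. b \<in> I} \<noteq> {}" using I0 by blast
lemma qset_bdd: "bdd_below {p n (x + b) | b. b \<in> I}"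
  by (rule bdd_belowI[of _ 0]) (auto simp: p_nonneg)
lemma qsn_lower: "b \<in> I \<Longrightarrow> qsn p I n x \<le> p n (x + b)"
  unfolding qsn_def by (rule cInf_lower[OF _ qset_bdd]) blast
lemma qsn_greatest: "(\<And>b. b \<in> I \<Longrightarrow> z \<le> p n (x + b)) \<Longrightarrow> z \<le> qsn p I n x"
  unfolding qsn_def by (rule cInf_greatest[OF qset_ne]) blast
lemma qsn_scaled: "K \<ge> 0 \<Longrightarrow> (\<And>b. b \<in> I \<Longrightarrow> z \<le> K * p n (x + b)) \<Longrightarrow> z \<le> K * qsn p I n x"
  unfolding qsn_def by (rule le_mult_Inf[OF qset_ne]) blast+
lemma qsn_nonneg: "0 \<le> qsn p I n x"
  by (rule qsn_greatest) (simp add: p_nonneg)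
lemma qsn_le_p: "qsn p I n x \<le> p n x"
  using qsn_lower[OF I0] by simp
lemma qsn_I: "x \<in> I \<Longrightarrow> qsn p I n x = 0"
  using qsn_lower[OF Ineg, of x n x] qsn_nonneg[of n x] by simp

lemma qsn_tri: "qsn p I n (x + y) \<le> qsn p I n x + qsn p I n y"
proof -
  have 1: "qsn p I n (x + y) \<le> p n (x + b) + p n (y + b')" if "b \<in> I" "b' \<in> I" for b b'
  proof -
    have "qsn p I n (x + y) \<le> p n (x + y + (b + b'))" using qsn_lower Iadd that by blast
    also have "x + y + (b + b') = (x + b) + (y + b')" by (simp add: algebra_simps)
    finally show ?thesis using p_tri order_trans by blast
  qed
  have 2: "qsn p I n (x + y) - qsn p I n x \<le> p n (y + b')" if "b' \<in> I" for b'
  proof -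
    have "qsn p I n (x + y) - p n (y + b') \<le> qsn p I n x"
      by (rule qsn_greatest) (use 1 that in force)
    thus ?thesis by simp
  qed
  have "qsn p I n (x + y) - qsn p I n x \<le> qsn p I n y"
    by (rule qsn_greatest) (use 2 in blast)
  thus ?thesis by simp
qed

lemma qsn_neg_le: "qsn p I n (- x) \<le> qsn p I n x"
proof (rule qsn_greatest)
  fix b assume "b \<in> I"
  hence "qsn p I n (- x) \<le> p n (- x + - b)" using qsn_lower Ineg by blast
  also have "\<dots> = p n (x + b)" by (metis minus_add_distrib p_neg)
  finally show "qsn p I n (- x) \<le> p n (x + b)" .
qed
lemma qsn_neg[simp]: "qsn p I n (- x) = qsn p I n x"
  using qsn_neg_le[of n x] qsn_neg_le[of n "-x"] by simp

lemma qsn_diff: "qsn p I n (x - y) \<le> qsn p I n x + qsn p I n y"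
  using qsn_tri[of n x "-y"] by simp

lemma qsn_lip: "\<bar>qsn p I n x - qsn p I n y\<bar> \<le> qsn p I n (x - y)"
proof -
  have "qsn p I n x \<le> qsn p I n (x - y) + qsn p I n y" using qsn_tri[of n "x - y" y] by simp
  moreover have "qsn p I n y \<le> qsn p I n (y - x) + qsn p I n x" using qsn_tri[of n "y - x" x] by simp
  moreover have "qsn p I n (y - x) = qsn p I n (x - y)" by (metis minus_diff_eq qsn_neg)
  ultimately show ?thesis by linarith
qed

lemma qsn_cong: "x - y \<in> I \<Longrightarrow> qsn p I n x = qsn p I n y"
  using qsn_lip[of n x y] qsn_I by fastforce

lemma qsn_mult: "qsn p I n (x * y) \<le> qsn p I n x * qsn p I n y"
proof -
  have 1: "qsn p I n (x * y) \<le> p n (x + b) * p n (y + b')" if "b \<in> I" "b' \<in> I" for b b'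
  proof -
    have i1: "x * b' \<in> I" using that(2) by (rule Imultl)
    have i2: "b * y \<in> I" using that(1) by (rule Imultr)
    have i3: "b * b' \<in> I" using that(1) by (rule Imultr)
    have "x * b' + b * y + b * b' \<in> I" by (rule Iadd[OF Iadd[OF i1 i2] i3])
    hence "qsn p I n (x * y) \<le> p n (x * y + (x * b' + b * y + b * b'))" using qsn_lower by blast
    also have "x * y + (x * b' + b * y + b * b') = (x + b) * (y + b')" by (simp add: algebra_simps)
    finally show ?thesis using p_mult order_trans by blast
  qed
  have 2: "qsn p I n (x * y) \<le> p n (x + b) * qsn p I n y" if "b \<in> I" for b
    by (rule qsn_scaled) (use 1 that p_nonneg in auto)
  have "qsn p I n (x * y) \<le> qsn p I n y * qsn p I n x"
    by (rule qsn_scaled) (use 2 qsn_nonneg in \<open>auto simp: mult.commute\<close>)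
  thus ?thesis by (simp add: mult.commute)
qed

lemma qsn_lmul: "qsn p I n (a * x) \<le> p n a * qsn p I n x"
  using qsn_mult[of n a x] qsn_le_p[of n a] qsn_nonneg[of n x]
  by (meson mult_right_mono order_trans)
lemma qsn_rmul: "qsn p I n (x * a) \<le> qsn p I n x * p n a"
  using qsn_mult[of n x a] qsn_le_p[of n a] qsn_nonneg[of n x]
  by (meson mult_left_mono order_trans)

end


context fq begin

lemma tset_ne: "{tval p I n L' | L'. tensor_eq I L L'} \<noteq> {}" using tensor_eq_refl by blast
lemma tval_nonneg: "0 \<le> tval p I n L"
  by (induction L) (auto simp: qsn_nonneg)
lemma tset_bdd: "bdd_below {tval p I n L' | L'. tensor_eq I L L'}"
  by (rule bdd_belowI[of _ 0]) (auto simp: tval_nonneg)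
lemma tsn_lower: "tensor_eq I L L' \<Longrightarrow> tsn p I n L \<le> tval p I n L'"
  unfolding tsn_alt by (rule cInf_lower[OF _ tset_bdd]) blast
lemma tsn_le_tval: "tsn p I n L \<le> tval p I n L" by (rule tsn_lower) simp
lemma tsn_scaled: "K \<ge> 0 \<Longrightarrow> (\<And>L'. tensor_eq I L L' \<Longrightarrow> z \<le> K * tval p I n L') \<Longrightarrow> z \<le> K * tsn p I n L"
  unfolding tsn_alt by (rule le_mult_Inf[OF tset_ne]) blast+
lemma tsn_greatest: "(\<And>L'. tensor_eq I L L' \<Longrightarrow> z \<le> tval p I n L') \<Longrightarrow> z \<le> tsn p I n L"
  using tsn_scaled[of 1 L z n] by simp
lemma tsn_nonneg: "0 \<le> tsn p I n L" by (rule tsn_greatest) (simp add: tval_nonneg)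
lemma tsn_cong: "tensor_eq I L L' \<Longrightarrow> tsn p I n L = tsn p I n L'"
  unfolding tsn_alt by (metis tensor_eq_sym tensor_eq_trans)

lemma tsn_Nil[simp]: "tsn p I n [] = 0"
  using tsn_le_tval[of n "[]"] tsn_nonneg[of n "[]"] by simp

lemma tsn_append: "tsn p I n (L1 @ L2) \<le> tsn p I n L1 + tsn p I n L2"
proof -
  have 1: "tsn p I n (L1 @ L2) \<le> tval p I n A + tval p I n B"
    if "tensor_eq I L1 A" "tensor_eq I L2 B" for A B
  proof -
    have "tensor_eq I (L1 @ L2) (A @ B)" using that by (simp add: tensor_eq_bsum)
    thus ?thesis using tsn_lower by fastforce
  qed
  have 2: "tsn p I n (L1 @ L2) - tsn p I n L2 \<le> tval p I n A" if "tensor_eq I L1 A" for A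
  proof -
    have "tsn p I n (L1 @ L2) - tval p I n A \<le> tsn p I n L2"
      by (rule tsn_greatest) (use 1 that in force)
    thus ?thesis by simp
  qed
  have "tsn p I n (L1 @ L2) - tsn p I n L2 \<le> tsn p I n L1"
    by (rule tsn_greatest) (use 2 in blast)
  thus ?thesis by simp
qed

lemma tval_neg1[simp]: "tval p I n (neg1 L) = tval p I n L"
  by (induction L) auto

lemma tsn_neg1_le: "tsn p I n (neg1 L) \<le> tsn p I n L"
proof (rule tsn_greatest)
  fix L' assume "tensor_eq I L L'"
  hence "tensor_eq I (neg1 L) (neg1 L')" by (simp add: tensor_eq_bsum)
  thus "tsn p I n (neg1 L) \<le> tval p I n L'" using tsn_lower by fastforce
qed
lemma tsn_neg1[simp]: "tsn p I n (neg1 L) = tsn p I n L"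
  using tsn_neg1_le[of n L] tsn_neg1_le[of n "neg1 L"] by simp

lemma tsn_lip: "\<bar>tsn p I n L - tsn p I n L'\<bar> \<le> tsn p I n (tdiff L L')"
proof -
  have "tensor_eq I L (tdiff L L' @ L')" by (simp add: tensor_eq_bsum tdiff_neg1)
  hence a: "tsn p I n L \<le> tsn p I n (tdiff L L') + tsn p I n L'"
    using tsn_cong tsn_append by metis
  have "tensor_eq I L' (neg1 (tdiff L L') @ L)" by (simp add: tensor_eq_bsum tdiff_neg1)
  hence "tsn p I n L' \<le> tsn p I n (neg1 (tdiff L L')) + tsn p I n L"
    using tsn_cong tsn_append by metis
  with a show ?thesis by simp
qed

lemma qb_f:
  assumes "linear f" "\<forall>x\<in>I. f x = 0"
  shows "quot_bilinear I (\<lambda>x y. f (x * y))"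
  using assms unfolding quot_bilinear_def linear_iff
  by (auto simp: distrib_left distrib_right Imultl Imultr)

lemma bsum_f: "linear f \<Longrightarrow> bsum (\<lambda>x y. f (x * y)) L = f (tpi L)"
  by (induction L) (auto simp: linear_iff linear_0)

lemma tpi_cong: "tensor_eq I L L' \<Longrightarrow> tpi L - tpi L' \<in> I"
proof (rule ccontr)
  assume te: "tensor_eq I L L'" and ni: "tpi L - tpi L' \<notin> I"
  obtain f :: "'a \<Rightarrow> real" where f: "linear f" "\<forall>x\<in>I. f x = 0" "f (tpi L - tpi L') = 1"
    using sep_functional[OF Isub ni] by blast
  have "bsum (\<lambda>x y. f (x * y)) L = bsum (\<lambda>x y. f (x * y)) L'"
    using te qb_f[OF f(1,2)] by (simp add: tensor_eq_bsum)
  hence "f (tpi L) = f (tpi L')" using bsum_f[OF f(1)] by simp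
  hence "f (tpi L - tpi L') = 0" using f(1) by (simp add: linear_diff)
  with f(3) show False by simp
qed

lemma qsn_tpi_tval: "qsn p I n (tpi L) \<le> tval p I n L"
proof (induction L)
  case Nil then show ?case using qsn_I[OF I0] by simp
next
  case (Cons a L)
  obtain x y where a: "a = (x,y)" by force
  have "qsn p I n (x * y + tpi L) \<le> qsn p I n (x*y) + qsn p I n (tpi L)" by (rule qsn_tri)
  also have "\<dots> \<le> qsn p I n x * qsn p I n y + tval p I n L" using qsn_mult Cons by (meson add_mono)
  finally show ?case using a by simp
qed

lemma qsn_tpi: "qsn p I n (tpi L) \<le> tsn p I n L"
proof (rule tsn_greatest)
  fix L' assume "tensor_eq I L L'"
  hence "qsn p I n (tpi L) = qsn p I n (tpi L')" using tpi_cong qsn_cong by blast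
  thus "qsn p I n (tpi L) \<le> tval p I n L'" using qsn_tpi_tval by simp
qed

lemma qb_lmod: "quot_bilinear I \<beta> \<Longrightarrow> quot_bilinear I (\<lambda>x y. \<beta> (a * x) y)"
  unfolding quot_bilinear_def by (auto simp: distrib_left Imultl)
lemma qb_rmod: "quot_bilinear I \<beta> \<Longrightarrow> quot_bilinear I (\<lambda>x y. \<beta> x (y * a))"
  unfolding quot_bilinear_def by (auto simp: distrib_right Imultr)
lemma bsum_lmod: "bsum \<beta> (lmod a L) = bsum (\<lambda>x y. \<beta> (a * x) y) L"
  by (induction L) auto
lemma bsum_rmod: "bsum \<beta> (rmod L a) = bsum (\<lambda>x y. \<beta> x (y * a)) L"
  by (induction L) auto

lemma tval_lmod: "tval p I n (lmod a L) \<le> p n a * tval p I n L"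
proof (induction L)
  case (Cons b L)
  obtain x y where b: "b = (x,y)" by force
  have "qsn p I n (a * x) * qsn p I n y \<le> p n a * qsn p I n x * qsn p I n y"
    using qsn_lmul qsn_nonneg by (simp add: mult_right_mono)
  thus ?case using Cons b by (simp add: distrib_left mult.assoc)
qed simp
lemma tval_rmod: "tval p I n (rmod L a) \<le> p n a * tval p I n L"
proof (induction L)
  case (Cons b L)
  obtain x y where b: "b = (x,y)" by force
  have "qsn p I n x * qsn p I n (y * a) \<le> qsn p I n x * (qsn p I n y * p n a)"
    using qsn_rmul qsn_nonneg by (simp add: mult_left_mono)
  thus ?case using Cons b by (simp add: distrib_left mult_ac)
qed simp

lemma tsn_lmod: "tsn p I n (lmod a L) \<le> p n a * tsn p I n L"
proof (rule tsn_scaled[OF p_nonneg])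
  fix L' assume "tensor_eq I L L'"
  hence "tensor_eq I (lmod a L) (lmod a L')" by (simp add: tensor_eq_bsum bsum_lmod qb_lmod)
  thus "tsn p I n (lmod a L) \<le> p n a * tval p I n L'" using tsn_lower tval_lmod order_trans by metis
qed
lemma tsn_rmod: "tsn p I n (rmod L a) \<le> p n a * tsn p I n L"
proof (rule tsn_scaled[OF p_nonneg])
  fix L' assume "tensor_eq I L L'"
  hence "tensor_eq I (rmod L a) (rmod L' a)" by (simp add: tensor_eq_bsum bsum_rmod qb_rmod)
  thus "tsn p I n (rmod L a) \<le> p n a * tval p I n L'" using tsn_lower tval_rmod order_trans by metis
qed

lemma tsn_comm: "tsn p I n (comm a L) \<le> 2 * p n a * tsn p I n L"
proof -
  have "tsn p I n (comm a L) \<le> tsn p I n (lmod a L) + tsn p I n (neg1 (rmod L a))"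
    unfolding comm_def tdiff_neg1 by (rule tsn_append)
  thus ?thesis using tsn_lmod[of n a L] tsn_rmod[of n L a] by simp
qed

lemma comm_lip: "\<bar>tsn p I n (comm a L) - tsn p I n (comm a L')\<bar> \<le> 2 * p n a * tsn p I n (tdiff L L')"
proof -
  have "tensor_eq I (tdiff (comm a L) (comm a L')) (comm a (tdiff L L'))"
    by (simp add: tensor_eq_bsum comm_def tdiff_neg1)
  hence "tsn p I n (tdiff (comm a L) (comm a L')) = tsn p I n (comm a (tdiff L L'))" by (rule tsn_cong)
  thus ?thesis using tsn_lip[of n "comm a L" "comm a L'"] tsn_comm[of n a "tdiff L L'"] by linarith
qed

lemma comm_I: "a \<in> I \<Longrightarrow> tsn p I n (comm a L) = 0"
proof -
  assume a: "a \<in> I"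
  have "tensor_eq I (comm a L) []"
    unfolding tensor_eq_bsum
  proof (intro allI impI)
    fix \<beta> assume qb: "quot_bilinear I \<beta>"
    have "bsum \<beta> (lmod a L) = 0" using qb a
      by (induction L) (auto simp: quot_bilinear_def Imultr)
    moreover have "bsum \<beta> (rmod L a) = 0" using qb a
      by (induction L) (auto simp: quot_bilinear_def Imultl)
    ultimately show "bsum \<beta> (comm a L) = bsum \<beta> []" using qb by (simp add: comm_def tdiff_neg1)
  qed
  thus ?thesis using tsn_cong by fastforce
qed

lemma qb_diff1: "quot_bilinear I \<beta> \<Longrightarrow> \<beta> (u - v) y = \<beta> u y - \<beta> v y"
  unfolding quot_bilinear_def by (metis add_diff_cancel_right' diff_add_cancel eq_diff_eq)
lemma qb_diff2: "quot_bilinear I \<beta> \<Longrightarrow> \<beta> x (u - v) = \<beta> x u - \<beta> x v"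
  unfolding quot_bilinear_def by (metis add_diff_cancel_right' diff_add_cancel eq_diff_eq)

lemma comm_split: "tsn p I n (comm b L) \<le> tsn p I n (comm a L) + 2 * p n (b - a) * tsn p I n L"
proof -
  have "tensor_eq I (comm b L) (comm a L @ comm (b - a) L)"
    unfolding tensor_eq_bsum
  proof (intro allI impI)
    fix \<beta> assume qb: "quot_bilinear I \<beta>"
    have "bsum \<beta> (lmod b L) = bsum \<beta> (lmod a L) + bsum \<beta> (lmod (b - a) L)" using qb
      by (induction L) (auto simp: left_diff_distrib right_diff_distrib qb_diff1 qb_diff2)
    moreover have "bsum \<beta> (rmod L b) = bsum \<beta> (rmod L a) + bsum \<beta> (rmod L (b - a))" using qb
      by (induction L) (auto simp: left_diff_distrib right_diff_distrib qb_diff1 qb_diff2)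
    ultimately show "bsum \<beta> (comm b L) = bsum \<beta> (comm a L @ comm (b - a) L)"
      using qb by (simp add: comm_def tdiff_neg1)
  qed
  hence "tsn p I n (comm b L) \<le> tsn p I n (comm a L) + tsn p I n (comm (b - a) L)"
    using tsn_cong tsn_append by metis
  thus ?thesis using tsn_comm[of n "b - a" L] by simp
qed

lemma qpi_lip: "\<bar>qsn p I n (a * tpi L - a) - qsn p I n (a * tpi L' - a)\<bar> \<le> p n a * tsn p I n (tdiff L L')"
proof -
  have "(a * tpi L - a) - (a * tpi L' - a) = a * tpi (tdiff L L')"
    by (simp add: tpi_tdiff algebra_simps)
  hence "\<bar>qsn p I n (a * tpi L - a) - qsn p I n (a * tpi L' - a)\<bar> \<le> qsn p I n (a * tpi (tdiff L L'))"
    using qsn_lip by metis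
  also have "\<dots> \<le> p n a * qsn p I n (tpi (tdiff L L'))" by (rule qsn_lmul)
  also have "\<dots> \<le> p n a * tsn p I n (tdiff L L')" by (rule mult_left_mono[OF qsn_tpi p_nonneg])
  finally show ?thesis .
qed

lemma lip_conv:
  assumes "tcauchy p I M" "0 \<le> K" "\<And>L L'. \<bar>f L - f L'\<bar> \<le> K * tsn p I n (tdiff L L')"
  shows "convergent (\<lambda>k. f (M k))"
proof (rule Cauchy_convergent, rule metric_CauchyI)
  fix e :: real assume e: "0 < e"
  then obtain N where N: "\<forall>j\<ge>N. \<forall>k\<ge>N. tsn p I n (tdiff (M j) (M k)) < e / (K + 1)"
    using assms(1,2) unfolding tcauchy_def by (metis add_pos_nonneg divide_pos_pos zero_less_one less_add_same_cancel2 add.commute)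
  show "\<exists>N. \<forall>j\<ge>N. \<forall>k\<ge>N. dist (f (M j)) (f (M k)) < e"
  proof (intro exI allI impI)
    fix j k assume jk: "N \<le> j" "N \<le> k"
    have t: "tsn p I n (tdiff (M j) (M k)) < e / (K + 1)" using N jk by blast
    have "dist (f (M j)) (f (M k)) \<le> K * tsn p I n (tdiff (M j) (M k))"
      using assms(3) by (simp add: dist_real_def)
    also have "\<dots> \<le> (K + 1) * tsn p I n (tdiff (M j) (M k))"
      using tsn_nonneg by (simp add: mult_right_mono)
    also have "\<dots> < (K + 1) * (e / (K + 1))"
      using t assms(2) by (intro mult_strict_left_mono) auto
    also have "\<dots> = e" using assms(2) by simp
    finally show "dist (f (M j)) (f (M k)) < e" .
  qed
qed

end



definition pmap :: "('a \<Rightarrow> 'b) \<Rightarrow> ('a \<times> 'a) list \<Rightarrow> ('b \<times> 'b) list" where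
  "pmap f L = map (\<lambda>(x,y). (f x, f y)) L"

lemma pmap_Nil[simp]: "pmap f [] = []" by (simp add: pmap_def)
lemma pmap_Cons[simp]: "pmap f ((x,y)#L) = (f x, f y) # pmap f L" by (simp add: pmap_def)
lemma pmap_append[simp]: "pmap f (L @ L') = pmap f L @ pmap f L'" by (simp add: pmap_def)

context
  fixes \<phi> :: "'a::real_algebra \<Rightarrow> 'b::real_algebra"
  assumes ah: "alg_hom \<phi>"
begin
lemma ah_add[simp]: "\<phi> (x + y) = \<phi> x + \<phi> y" using ah by (simp add: alg_hom_def)
lemma ah_scale[simp]: "\<phi> (r *\<^sub>R x) = r *\<^sub>R \<phi> x" using ah by (simp add: alg_hom_def)
lemma ah_mult[simp]: "\<phi> (x * y) = \<phi> x * \<phi> y" using ah by (simp add: alg_hom_def)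
lemma ah_0[simp]: "\<phi> 0 = 0" using ah_scale[of 0 0] by simp
lemma ah_neg[simp]: "\<phi> (- x) = - \<phi> x" using ah_scale[of "-1" x] by simp
lemma ah_diff[simp]: "\<phi> (x - y) = \<phi> x - \<phi> y" using ah_add[of x "-y"] by simp

lemma pmap_neg1[simp]: "pmap \<phi> (neg1 L) = neg1 (pmap \<phi> L)" by (induction L) auto
lemma pmap_tdiff: "pmap \<phi> (tdiff L L') = tdiff (pmap \<phi> L) (pmap \<phi> L')" by (simp add: tdiff_neg1)
lemma pmap_lmod[simp]: "pmap \<phi> (lmod a L) = lmod (\<phi> a) (pmap \<phi> L)" by (induction L) auto
lemma pmap_rmod[simp]: "pmap \<phi> (rmod L a) = rmod (pmap \<phi> L) (\<phi> a)" by (induction L) auto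
lemma pmap_comm: "pmap \<phi> (comm a L) = comm (\<phi> a) (pmap \<phi> L)" by (simp add: comm_def pmap_tdiff)
lemma tpi_pmap: "tpi (pmap \<phi> L) = \<phi> (tpi L)" by (induction L) auto

lemma bsum_pmap: "bsum \<beta> (pmap \<phi> L) = bsum (\<lambda>x y. \<beta> (\<phi> x) (\<phi> y)) L" by (induction L) auto

context
  fixes p :: "nat \<Rightarrow> 'a \<Rightarrow> real" and I and q :: "nat \<Rightarrow> 'b \<Rightarrow> real" and J and m n c
  assumes A: "fq p I" and B: "fq q J" and IJ: "\<phi> ` I \<subseteq> J"
    and c: "c \<ge> 0" and bnd: "\<And>x. q m (\<phi> x) \<le> c * p n x"
begin

lemma qsn_phi: "qsn q J m (\<phi> x) \<le> c * qsn p I n x"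
proof (rule fq.qsn_scaled[OF A c])
  fix b assume b: "b \<in> I"
  have "qsn q J m (\<phi> x) \<le> q m (\<phi> x + \<phi> b)" using fq.qsn_lower[OF B] b IJ by blast
  also have "\<dots> \<le> c * p n (x + b)" using bnd[of "x + b"] by simp
  finally show "qsn q J m (\<phi> x) \<le> c * p n (x + b)" .
qed

lemma qb_pmap: "quot_bilinear J \<beta> \<Longrightarrow> quot_bilinear I (\<lambda>x y. \<beta> (\<phi> x) (\<phi> y))"
  unfolding quot_bilinear_def using IJ by auto

lemma te_pmap: "tensor_eq I L L' \<Longrightarrow> tensor_eq J (pmap \<phi> L) (pmap \<phi> L')"
  by (simp add: tensor_eq_bsum bsum_pmap qb_pmap)

lemma tval_phi: "tval q J m (pmap \<phi> L) \<le> c^2 * tval p I n L"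
proof (induction L)
  case (Cons a L)
  obtain x y where a: "a = (x,y)" by force
  have "qsn q J m (\<phi> x) * qsn q J m (\<phi> y) \<le> (c * qsn p I n x) * (c * qsn p I n y)"
    by (intro mult_mono qsn_phi fq.qsn_nonneg[OF B]) (use c fq.qsn_nonneg[OF A] in simp)
  thus ?case using Cons a by (simp add: power2_eq_square distrib_left mult_ac)
qed simp

lemma tsn_phi: "tsn q J m (pmap \<phi> L) \<le> c^2 * tsn p I n L"
proof (rule fq.tsn_scaled[OF A])
  show "0 \<le> c^2" by simp
  fix L' assume "tensor_eq I L L'"
  hence "tensor_eq J (pmap \<phi> L) (pmap \<phi> L')" by (rule te_pmap)
  thus "tsn q J m (pmap \<phi> L) \<le> c^2 * tval p I n L'"
    using fq.tsn_lower[OF B] tval_phi order_trans by metis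
qed

end

lemma cont_bound:
  fixes p :: "nat \<Rightarrow> 'a \<Rightarrow> real" and q :: "nat \<Rightarrow> 'b \<Rightarrow> real"
  assumes A: "fq p I" and B: "fq q J" and sc: "sn_continuous p q \<phi>"
  shows "\<exists>n c. c > 0 \<and> (\<forall>x. q m (\<phi> x) \<le> c * p n x)"
proof -
  let ?U = "{y. q m y < 1}"
  have "sn_open q ?U" unfolding sn_open_def
  proof
    fix x assume x: "x \<in> ?U"
    show "\<exists>n \<epsilon>. \<epsilon> > 0 \<and> {y. q n (y - x) < \<epsilon>} \<subseteq> ?U"
    proof (intro exI conjI)
      show "1 - q m x > 0" using x by simp
      show "{y. q m (y - x) < 1 - q m x} \<subseteq> ?U"
      proof
        fix y assume "y \<in> {y. q m (y - x) < 1 - q m x}"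
        moreover have "q m y \<le> q m (y - x) + q m x" using fq.p_tri[OF B, of m "y - x" x] by simp
        ultimately show "y \<in> ?U" by simp
      qed
    qed
  qed
  hence "sn_open p (\<phi> -` ?U)" using sc unfolding sn_continuous_def by blast
  moreover have "0 \<in> \<phi> -` ?U" using fq.p_0[OF B] by simp
  ultimately obtain n \<epsilon> where e: "\<epsilon> > 0" "{y. p n (y - 0) < \<epsilon>} \<subseteq> \<phi> -` ?U"
    unfolding sn_open_def by blast
  have key: "\<And>y. p n y < \<epsilon> \<Longrightarrow> q m (\<phi> y) < 1" using e by auto
  have "q m (\<phi> x) \<le> (2 / \<epsilon>) * p n x" for x
  proof (cases "p n x = 0")
    case True
    show ?thesis
    proof (rule ccontr)
      assume "\<not> ?thesis"
      hence pos: "q m (\<phi> x) > 0" using True by simp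
      have h0: "p n ((2 / q m (\<phi> x)) *\<^sub>R x) = 0" using True fq.p_hom[OF A] by simp
      have "q m (\<phi> ((2 / q m (\<phi> x)) *\<^sub>R x)) < 1" by (rule key) (simp add: h0 e(1))
      moreover have "q m (\<phi> ((2 / q m (\<phi> x)) *\<^sub>R x)) = 2" using pos fq.p_hom[OF B] by simp
      ultimately show False by simp
    qed
  next
    case False
    hence pos: "p n x > 0" using fq.p_nonneg[OF A, of n x] by simp
    let ?t = "\<epsilon> / (2 * p n x)"
    have t: "?t > 0" using pos e by simp
    have h1: "p n (?t *\<^sub>R x) = \<epsilon> / 2" using pos fq.p_hom[OF A] t e by simp
    have "q m (\<phi> (?t *\<^sub>R x)) < 1" by (rule key) (simp add: h1 e(1))
    hence "?t * q m (\<phi> x) < 1" using fq.p_hom[OF B] t e pos by simp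
    hence "q m (\<phi> x) < 1 / ?t" using t e pos by (simp add: field_simps)
    also have "1 / ?t = (2 / \<epsilon>) * p n x" using e pos by (simp add: field_simps)
    finally show ?thesis by simp
  qed
  thus ?thesis using e by (intro exI[of _ n] exI[of _ "2/\<epsilon>"]) auto
qed

lemma dense_approx:
  fixes q :: "nat \<Rightarrow> 'b \<Rightarrow> real"
  assumes B: "fq q J" and d: "sn_dense q (range \<phi>)" and \<delta>: "\<delta> > 0"
  shows "\<exists>a. q m (b - \<phi> a) < \<delta>"
proof -
  let ?U = "{y. q m (y - b) < \<delta>}"
  have "sn_open q ?U" unfolding sn_open_def
  proof
    fix x assume x: "x \<in> ?U"
    show "\<exists>n \<epsilon>. \<epsilon> > 0 \<and> {y. q n (y - x) < \<epsilon>} \<subseteq> ?U"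
    proof (intro exI conjI)
      show "\<delta> - q m (x - b) > 0" using x by simp
      show "{y. q m (y - x) < \<delta> - q m (x - b)} \<subseteq> ?U"
      proof
        fix y assume "y \<in> {y. q m (y - x) < \<delta> - q m (x - b)}"
        moreover have "q m (y - b) \<le> q m (y - x) + q m (x - b)" using fq.p_tri[OF B, of m "y - x" "x - b"] by simp
        ultimately show "y \<in> ?U" by simp
      qed
    qed
  qed
  moreover have "b \<in> ?U" using \<delta> fq.p_0[OF B] by simp
  ultimately have "?U \<inter> range \<phi> \<noteq> {}" using d unfolding sn_dense_def by blast
  then obtain a where "q m (\<phi> a - b) < \<delta>" by auto
  thus ?thesis using fq.p_sym[OF B] by metis
qed

end



theorem theorem2p3:
  fixes p :: "nat \<Rightarrow> 'a::real_algebra \<Rightarrow> real"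
    and q :: "nat \<Rightarrow> 'b::real_algebra \<Rightarrow> real"
    and \<phi> :: "'a \<Rightarrow> 'b"
    and I :: "'a set" and J :: "'b set"
  assumes "frechet_algebra p" and "frechet_algebra q"
    and "alg_hom \<phi>" and "sn_continuous p q \<phi>" and "sn_dense q (range \<phi>)"
    and "closed_ideal p I" and "closed_ideal q J" and "\<phi> ` I \<subseteq> J"
    and "has_lbad p I"
  shows "has_lbad q J"
proof -
  note ah = assms(3)
  have A: "fq p I" using assms(1,6) by (simp add: fq_def closed_ideal_def)
  have B: "fq q J" using assms(2,7) by (simp add: fq_def closed_ideal_def)
  obtain C where Cpos: "\<And>n. C n > 0" and H: "\<And>F n \<epsilon>. finite F \<and> F \<subseteq> - I \<and> \<epsilon> > 0 \<Longrightarrow>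
        (\<exists>M. tcauchy p I M \<and>
             lim (\<lambda>k. tsn p I n (M k)) \<le> C n \<and>
             (\<forall>a\<in>F. lim (\<lambda>k. tsn p I n (tdiff (lmod a (M k)) (rmod (M k) a))) < \<epsilon>) \<and>
             (\<forall>a. lim (\<lambda>k. qsn p I n (a * tpi (M k) - a)) < \<epsilon>))"
    using assms(9) unfolding has_lbad_def by blast
  have "\<forall>m. \<exists>nc. snd nc > 0 \<and> (\<forall>x. q m (\<phi> x) \<le> snd nc * p (fst nc) x)"
    using cont_bound[OF ah A B assms(4)] by fastforce
  then obtain g where g: "\<forall>m. snd (g m) > 0 \<and> (\<forall>x. q m (\<phi> x) \<le> snd (g m) * p (fst (g m)) x)"
    by metis
  define nn where "nn m = fst (g m)" for m
  define cc where "cc m = snd (g m)" for m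
  have ccpos: "\<And>m. cc m > 0" using g by (simp add: cc_def)
  have bnd: "\<And>m x. q m (\<phi> x) \<le> cc m * p (nn m) x" using g by (simp add: cc_def nn_def)
  have tsnphi: "\<And>m L. tsn q J m (pmap \<phi> L) \<le> (cc m)^2 * tsn p I (nn m) L"
    using tsn_phi[OF ah A B assms(8) less_imp_le[OF ccpos] bnd] by blast
  have qsnphi: "\<And>m x. qsn q J m (\<phi> x) \<le> cc m * qsn p I (nn m) x"
    using qsn_phi[OF ah A B assms(8) less_imp_le[OF ccpos] bnd] by blast
  show ?thesis unfolding has_lbad_def
  proof (intro exI[of _ "\<lambda>m. (cc m)^2 * C (nn m)"] conjI allI impI)
    show "\<And>m. 0 < (cc m)^2 * C (nn m)" using ccpos Cpos by (meson mult_pos_pos zero_less_power)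
    fix F m \<epsilon> assume asm: "finite F \<and> F \<subseteq> - J \<and> (\<epsilon>::real) > 0"
    hence \<epsilon>: "\<epsilon> > 0" and finF: "finite F" by auto
    define n where "n = nn m"
    define c where "c = cc m"
    have c: "c > 0" using ccpos by (simp add: c_def)
    define \<epsilon>' where "\<epsilon>' = min (\<epsilon> / (2 * c^2)) (\<epsilon> / (2 * c))"
    have \<epsilon>': "\<epsilon>' > 0" using c \<epsilon> by (simp add: \<epsilon>'_def)
    define \<delta>1 where "\<delta>1 = \<epsilon> / (4 * c^2 * (C n + 1))"
    have \<delta>1: "\<delta>1 > 0" using c \<epsilon> Cpos[of n] by (simp add: \<delta>1_def)
    have "\<forall>b. \<exists>a. q m (b - \<phi> a) < \<delta>1" using dense_approx[OF ah B assms(5) \<delta>1] by blast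
    then obtain ap where ap: "\<And>b. q m (b - \<phi> (ap b)) < \<delta>1" by metis
    define FA where "FA = ap ` F - I"
    have "finite FA \<and> FA \<subseteq> - I \<and> \<epsilon>' > 0" using finF \<epsilon>' by (auto simp: FA_def)
    from H[OF this] obtain M where
      tM: "tcauchy p I M" and M1: "lim (\<lambda>k. tsn p I n (M k)) \<le> C n" and
      M2: "\<forall>a\<in>FA. lim (\<lambda>k. tsn p I n (comm a (M k))) < \<epsilon>'" and
      M3: "\<forall>a. lim (\<lambda>k. qsn p I n (a * tpi (M k) - a)) < \<epsilon>'"
      unfolding comm_def by blast
    define M' where "M' k = pmap \<phi> (M k)" for k
    have tc': "tcauchy q J M'" unfolding tcauchy_def
    proof (intro allI impI)
      fix n' and e :: real assume e: "e > 0"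
      have "e / (cc n')^2 > 0" using e ccpos[of n'] by simp
      then obtain K where K: "\<forall>j\<ge>K. \<forall>k\<ge>K. tsn p I (nn n') (tdiff (M j) (M k)) < e / (cc n')^2"
        using tM unfolding tcauchy_def by blast
      show "\<exists>K. \<forall>j\<ge>K. \<forall>k\<ge>K. tsn q J n' (tdiff (M' j) (M' k)) < e"
      proof (intro exI allI impI)
        fix j k assume jk: "K \<le> j" "K \<le> k"
        have "tsn q J n' (tdiff (M' j) (M' k)) = tsn q J n' (pmap \<phi> (tdiff (M j) (M k)))"
          by (simp add: M'_def pmap_tdiff[OF ah])
        also have "\<dots> \<le> (cc n')^2 * tsn p I (nn n') (tdiff (M j) (M k))" by (rule tsnphi)
        also have "\<dots> < (cc n')^2 * (e / (cc n')^2)"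
          using K jk ccpos[of n'] by (intro mult_strict_left_mono) auto
        also have "\<dots> = e" using ccpos[of n'] by simp
        finally show "tsn q J n' (tdiff (M' j) (M' k)) < e" .
      qed
    qed
    have cA1: "convergent (\<lambda>k. tsn p I n (M k))"
      using fq.lip_conv[OF A tM, where f="\<lambda>L. tsn p I n L" and K=1 and n=n] fq.tsn_lip[OF A] by simp
    define lA1 where "lA1 = lim (\<lambda>k. tsn p I n (M k))"
    have LA1: "(\<lambda>k. tsn p I n (M k)) \<longlonglongrightarrow> lA1" using cA1 by (simp add: lA1_def convergent_LIMSEQ_iff)
    have lA1a: "0 \<le> lA1" by (rule LIMSEQ_le_const[OF LA1]) (simp add: fq.tsn_nonneg[OF A])
    have lA1: "0 \<le> lA1" "lA1 \<le> C n" using M1 lA1_def lA1a by auto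
    have cB1: "convergent (\<lambda>k. tsn q J m (M' k))"
      using fq.lip_conv[OF B tc', where f="\<lambda>L. tsn q J m L" and K=1 and n=m] fq.tsn_lip[OF B] by simp
    have P1: "lim (\<lambda>k. tsn q J m (M' k)) \<le> c^2 * lA1"
    proof (rule LIMSEQ_le[OF cB1[unfolded convergent_LIMSEQ_iff] tendsto_mult_left[OF LA1]])
      show "\<exists>N. \<forall>k\<ge>N. tsn q J m (M' k) \<le> c^2 * tsn p I n (M k)"
        using tsnphi by (simp add: M'_def c_def n_def)
    qed
    have R1: "lim (\<lambda>k. tsn q J m (M' k)) \<le> (cc m)^2 * C (nn m)"
      using P1 lA1 c by (simp add: c_def n_def[symmetric]) (meson mult_left_mono order_trans zero_le_power2)
    have R2: "lim (\<lambda>k. tsn q J m (comm b (M' k))) < \<epsilon>" if bF: "b \<in> F" for b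
    proof -
      define a where "a = ap b"
      define d where "d = b - \<phi> a"
      have d: "q m d < \<delta>1" "0 \<le> q m d" using ap[of b] fq.p_nonneg[OF B] by (auto simp: d_def a_def)
      have cA2: "convergent (\<lambda>k. tsn p I n (comm a (M k)))"
        using fq.lip_conv[OF A tM, where f="\<lambda>L. tsn p I n (comm a L)" and K="2 * p n a" and n=n]
          fq.comm_lip[OF A] fq.p_nonneg[OF A] by simp
      define lA2 where "lA2 = lim (\<lambda>k. tsn p I n (comm a (M k)))"
      have LA2: "(\<lambda>k. tsn p I n (comm a (M k))) \<longlonglongrightarrow> lA2" using cA2 by (simp add: lA2_def convergent_LIMSEQ_iff)
      have lA2: "lA2 < \<epsilon>'"
      proof (cases "a \<in> I")
        case True
        hence "(\<lambda>k. tsn p I n (comm a (M k))) = (\<lambda>k. 0)" using fq.comm_I[OF A] by simp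
        thus ?thesis using \<epsilon>' by (simp add: lA2_def)
      next
        case False
        hence "a \<in> FA" using bF by (simp add: FA_def a_def)
        thus ?thesis using M2 lA2_def by simp
      qed
      have cB2: "convergent (\<lambda>k. tsn q J m (comm b (M' k)))"
        using fq.lip_conv[OF B tc', where f="\<lambda>L. tsn q J m (comm b L)" and K="2 * q m b" and n=m]
          fq.comm_lip[OF B] fq.p_nonneg[OF B] by simp
      have pw: "tsn q J m (comm b (M' k)) \<le> c^2 * tsn p I n (comm a (M k)) + 2 * q m d * c^2 * tsn p I n (M k)" for k
      proof -
        have "tsn q J m (comm b (M' k)) \<le> tsn q J m (comm (\<phi> a) (M' k)) + 2 * q m d * tsn q J m (M' k)"
          using fq.comm_split[OF B] by (simp add: d_def)
        also have "tsn q J m (comm (\<phi> a) (M' k)) = tsn q J m (pmap \<phi> (comm a (M k)))"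
          by (simp add: M'_def pmap_comm[OF ah])
        also have "\<dots> \<le> c^2 * tsn p I n (comm a (M k))" using tsnphi by (simp add: c_def n_def)
        also have "2 * q m d * tsn q J m (M' k) \<le> 2 * q m d * (c^2 * tsn p I n (M k))"
          using tsnphi d(2) by (intro mult_left_mono) (simp_all add: M'_def c_def n_def)
        finally show ?thesis by (simp add: mult_ac)
      qed
      have "lim (\<lambda>k. tsn q J m (comm b (M' k))) \<le> c^2 * lA2 + 2 * q m d * c^2 * lA1"
        by (rule LIMSEQ_le[OF cB2[unfolded convergent_LIMSEQ_iff]
              tendsto_add[OF tendsto_mult_left[OF LA2] tendsto_mult_left[OF LA1]]]) (use pw in blast)
      also have "c^2 * lA2 < \<epsilon> / 2"
      proof -
        have "c^2 * lA2 < c^2 * \<epsilon>'" using lA2 c by simp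
        also have "c^2 * \<epsilon>' \<le> c^2 * (\<epsilon> / (2 * c^2))" using c by (intro mult_left_mono) (simp_all add: \<epsilon>'_def)
        also have "\<dots> = \<epsilon> / 2" using c by simp
        finally show ?thesis .
      qed
      also have "2 * q m d * c^2 * lA1 \<le> 2 * \<delta>1 * c^2 * C n"
        using d lA1 c by (intro mult_mono) auto
      also have "2 * \<delta>1 * c^2 * C n < \<epsilon> / 2"
      proof -
        have h: "\<delta>1 * (4 * c^2 * (C n + 1)) = \<epsilon>" using c Cpos[of n] by (simp add: \<delta>1_def)
        define Y where "Y = \<delta>1 * c^2"
        have Y: "0 < Y" using \<delta>1 c by (simp add: Y_def)
        have h2: "\<epsilon> = 4 * (Y * C n) + 4 * Y" using h by (simp add: Y_def algebra_simps)
        have h3: "2 * \<delta>1 * c^2 * C n = 2 * (Y * C n)" by (simp add: Y_def algebra_simps)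
        show ?thesis using h2 h3 Y by linarith
      qed
      finally show ?thesis by simp
    qed
    have R3: "lim (\<lambda>k. qsn q J m (b * tpi (M' k) - b)) < \<epsilon>" for b
    proof -
      define \<delta>2 where "\<delta>2 = \<epsilon> / (2 * (c * C n + 1))"
      have \<delta>2: "\<delta>2 > 0" unfolding \<delta>2_def by (intro divide_pos_pos mult_pos_pos add_pos_pos) (use \<epsilon> c Cpos[of n] in auto)
      obtain a where a: "q m (b - \<phi> a) < \<delta>2" using dense_approx[OF ah B assms(5) \<delta>2] by blast
      define d where "d = b - \<phi> a"
      have d: "q m d < \<delta>2" "0 \<le> q m d" using a fq.p_nonneg[OF B] by (auto simp: d_def)
      have cA3: "convergent (\<lambda>k. qsn p I n (a * tpi (M k) - a))"
        using fq.lip_conv[OF A tM, where f="\<lambda>L. qsn p I n (a * tpi L - a)" and K="p n a" and n=n]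
          fq.qpi_lip[OF A] fq.p_nonneg[OF A] by simp
      define lA3 where "lA3 = lim (\<lambda>k. qsn p I n (a * tpi (M k) - a))"
      have LA3: "(\<lambda>k. qsn p I n (a * tpi (M k) - a)) \<longlonglongrightarrow> lA3" using cA3 by (simp add: lA3_def convergent_LIMSEQ_iff)
      have lA3: "lA3 < \<epsilon>'" using M3 lA3_def by simp
      have cB3: "convergent (\<lambda>k. qsn q J m (b * tpi (M' k) - b))"
        using fq.lip_conv[OF B tc', where f="\<lambda>L. qsn q J m (b * tpi L - b)" and K="q m b" and n=m]
          fq.qpi_lip[OF B] fq.p_nonneg[OF B] by simp
      have pw: "qsn q J m (b * tpi (M' k) - b) \<le> c * qsn p I n (a * tpi (M k) - a) + (q m d * c * tsn p I n (M k) + q m d)" for k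
      proof -
        define t where "t = tpi (M k)"
        have e1: "b * tpi (M' k) - b = \<phi> (a * t - a) + (d * \<phi> t - d)"
          by (simp add: M'_def tpi_pmap[OF ah] t_def d_def ah_diff[OF ah] ah_mult[OF ah] algebra_simps)
        have "qsn q J m (b * tpi (M' k) - b) \<le> qsn q J m (\<phi> (a * t - a)) + qsn q J m (d * \<phi> t - d)"
          unfolding e1 by (rule fq.qsn_tri[OF B])
        also have "qsn q J m (\<phi> (a * t - a)) \<le> c * qsn p I n (a * t - a)"
          using qsnphi by (simp add: c_def n_def)
        also have "qsn q J m (d * \<phi> t - d) \<le> q m d * c * tsn p I n (M k) + q m d"
        proof -
          have "qsn q J m (d * \<phi> t - d) \<le> qsn q J m (d * \<phi> t) + qsn q J m d" by (rule fq.qsn_diff[OF B])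
          also have "qsn q J m (d * \<phi> t) \<le> q m d * qsn q J m (\<phi> t)" by (rule fq.qsn_lmul[OF B])
          also have "qsn q J m (\<phi> t) \<le> c * tsn p I n (M k)"
            using qsnphi[of m t] fq.qsn_tpi[OF A, of n "M k"] c by (simp add: c_def n_def t_def)
               (meson mult_left_mono order_trans less_imp_le)
          also have "qsn q J m d \<le> q m d" by (rule fq.qsn_le_p[OF B])
          finally show ?thesis using d(2) by (simp add: mult_left_mono mult.assoc)
        qed
        finally show ?thesis by (simp add: t_def)
      qed
      have "lim (\<lambda>k. qsn q J m (b * tpi (M' k) - b)) \<le> c * lA3 + (q m d * c * lA1 + q m d)"
        by (rule LIMSEQ_le[OF cB3[unfolded convergent_LIMSEQ_iff]
              tendsto_add[OF tendsto_mult_left[OF LA3] tendsto_add[OF tendsto_mult_left[OF LA1] tendsto_const]]])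
           (use pw in blast)
      also have "c * lA3 < \<epsilon> / 2"
      proof -
        have "c * lA3 < c * \<epsilon>'" using lA3 c by simp
        also have "c * \<epsilon>' \<le> c * (\<epsilon> / (2 * c))" using c by (intro mult_left_mono) (simp_all add: \<epsilon>'_def)
        also have "\<dots> = \<epsilon> / 2" using c by simp
        finally show ?thesis .
      qed
      also have "q m d * c * lA1 + q m d \<le> \<delta>2 * (c * C n + 1)"
      proof -
        have "q m d * c * lA1 \<le> \<delta>2 * c * C n" using d lA1 c by (intro mult_mono) auto
        thus ?thesis using d by (simp add: distrib_left mult_ac)
      qed
      also have "\<delta>2 * (c * C n + 1) = \<epsilon> / 2"
      proof -
        have nz: "c * C n + 1 > 0" using c Cpos[of n] by (simp add: add_pos_pos)
        show ?thesis unfolding \<delta>2_def using nz by (simp add: field_simps)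
      qed
      finally show ?thesis by simp
    qed
    show "\<exists>M. tcauchy q J M \<and> lim (\<lambda>k. tsn q J m (M k)) \<le> (cc m)^2 * C (nn m) \<and>
             (\<forall>a\<in>F. lim (\<lambda>k. tsn q J m (tdiff (lmod a (M k)) (rmod (M k) a))) < \<epsilon>) \<and>
             (\<forall>a. lim (\<lambda>k. qsn q J m (a * tpi (M k) - a)) < \<epsilon>)"
      using tc' R1 R2 R3 unfolding comm_def by blast
  qed
qed

end
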